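(* Let $X_1,\dots,X_n$ be random variables with values in $[0,b]$ such that $|\mathbb{E}[X_t\mid X_1,\dots,X_{t-1}]-\mu|\le C$ for all $t$, where $C$ is a constant with $0<C<\mu$. Let $S_n=X_1+\cdots+X_n$. Then for all $a\ge0$, $$\Pr\{S_n\ge n(\mu+C)+a\}\le \exp\!\Big(-2\Big(\tfrac{a(\mu-C)}{b(\mu+C)}\Big)^2/n\Big)$$ and $$\Pr\{S_n\le n(\mu-C)-a\}\le \exp\!\big(-2(a/b)^2/n\big).$$ *)

theory Defs
  imports "HOL-Probability.Probability"
begin

definition past_algebra :: "'a measure \<Rightarrow> (nat \<Rightarrow> 'a \<Rightarrow> real) \<Rightarrow> nat \<Rightarrow> 'a measure" where
  "past_algebra M X t =
     sigma (space M) {X i -` A \<inter> space M | i A. i \<in> {1..<t} \<and> A \<in> sets borel}"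

end

theory Submission
  imports Defs "HOL-Probability.Hoeffding"
begin

lemma past_G_sub: "{X i -` A \<inter> space M | i A. i \<in> {1..<t} \<and> A \<in> sets borel} \<subseteq> Pow (space M)"
  by auto

lemma past_space: "space (past_algebra M X t) = space M"
  unfolding past_algebra_def by (simp add: space_measure_of_conv)

lemma past_sets: "sets (past_algebra M X t) =
   sigma_sets (space M) {X i -` A \<inter> space M | i A. i \<in> {1..<t} \<and> A \<in> sets borel}"
  unfolding past_algebra_def by (rule sets_measure_of[OF past_G_sub])

lemma past_subalg:
  assumes "\<And>i. i \<in> {1..<t} \<Longrightarrow> X i \<in> borel_measurable M"
  shows "subalgebra M (past_algebra M X t)"
  unfolding subalgebra_def past_space past_sets
proof (intro conjI refl sets.sigma_sets_subset)
  show "{X i -` A \<inter> space M | i A. i \<in> {1..<t} \<and> A \<in> sets borel} \<subseteq> sets M"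
    using assms by (auto simp: measurable_sets)
qed

lemma past_meas:
  assumes "i \<in> {1..<t}"
  shows "X i \<in> borel_measurable (past_algebra M X t)"
proof (rule measurableI)
  fix A :: "real set" assume "A \<in> sets borel"
  then show "X i -` A \<inter> space (past_algebra M X t) \<in> sets (past_algebra M X t)"
    unfolding past_space past_sets using assms by (intro sigma_sets.Basic) blast
qed auto

lemma hoeff_aux:
  fixes h p :: real
  assumes "0 \<le> p" "p \<le> 1"
  shows "1 + p * (exp h - 1) \<le> exp (h * p + h\<^sup>2 / 8)"
proof (cases "h \<ge> 0")
  case True
  have pos: "1 + p * (exp h - 1) > 0"
    using assms True by (intro add_pos_nonneg mult_nonneg_nonneg) auto
  have "-h * p + ln (1 + p * (exp h - 1)) \<le> h\<^sup>2 / 8"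
    using Hoeffdings_lemma_aux[OF True assms(1)] by simp
  hence "ln (1 + p * (exp h - 1)) \<le> h * p + h\<^sup>2 / 8" by simp
  thus ?thesis using pos by (metis exp_le_cancel_iff exp_ln)
next
  case False
  define q where "q = 1 - p"
  have q: "q \<ge> 0" using assms q_def by simp
  have h': "-h \<ge> 0" using False by simp
  have pos: "1 + q * (exp (-h) - 1) > 0"
    using q h' by (intro add_pos_nonneg mult_nonneg_nonneg) auto
  have "-(-h) * q + ln (1 + q * (exp (-h) - 1)) \<le> (-h)\<^sup>2 / 8"
    using Hoeffdings_lemma_aux[OF h' q] by simp
  hence "ln (1 + q * (exp (-h) - 1)) \<le> -h * q + h\<^sup>2 / 8" by simp
  hence A: "1 + q * (exp (-h) - 1) \<le> exp (-h * q + h\<^sup>2 / 8)"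
    using pos by (metis exp_le_cancel_iff exp_ln)
  have "1 + p * (exp h - 1) = exp h * (1 + q * (exp (-h) - 1))"
    unfolding q_def by (simp add: algebra_simps exp_minus field_simps)
  also have "\<dots> \<le> exp h * exp (-h * q + h\<^sup>2 / 8)"
    using A by simp
  also have "\<dots> = exp (h * p + h\<^sup>2 / 8)"
    unfolding q_def by (simp add: exp_add[symmetric] algebra_simps)
  finally show ?thesis .
qed

lemma exp_convex_bound:
  fixes l b y :: real
  assumes "b > 0" "0 \<le> y" "y \<le> b"
  shows "exp (l * y) \<le> 1 + y * (exp (l * b) - 1) / b"
proof -
  define u where "u = y / b"
  have u: "0 \<le> u" "u \<le> 1" using assms u_def by auto
  have "exp ((1 - u) * 0 + u * (l * b)) \<le> (1 - u) * exp 0 + u * exp (l * b)"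
    using convex_onD[OF convex_on_exp[of 1] , of u 0 "l*b"] u by simp
  moreover have "l * y = (1 - u) * 0 + u * (l * b)" using assms u_def by simp
  moreover have "(1 - u) * exp 0 + u * exp (l * b) = 1 + y * (exp (l * b) - 1) / b"
    using assms u_def by (simp add: field_simps)
  ultimately show ?thesis by metis
qed

lemma mgf_bound:
  assumes P: "prob_space M"
    and meas: "\<And>t. t \<in> {1..n} \<Longrightarrow> X t \<in> borel_measurable M"
    and range: "\<And>t x. t \<in> {1..n} \<Longrightarrow> x \<in> space M \<Longrightarrow> X t x \<in> {0..b}"
    and b: "b > 0"
    and cb: "\<And>t. t \<in> {1..n} \<Longrightarrow> AE x in M. (exp (l*b) - 1) * real_cond_exp M (past_algebra M X t) (X t) x \<le> (exp (l*b) - 1) * (p*b)"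
    and p: "0 \<le> p" "p \<le> 1"
  shows "k \<le> n \<Longrightarrow> (\<integral>x. exp (l * (\<Sum>t=1..k. X t x)) \<partial>M) \<le> (1 + p*(exp (l*b) - 1))^k"
proof (induction k)
  case 0
  interpret prob_space M by fact
  show ?case by (simp add: prob_space)
next
  case (Suc k)
  interpret prob_space M by fact
  define t where "t = Suc k"
  define F where "F = past_algebra M X t"
  define f where "f = (\<lambda>x. exp (l * (\<Sum>i=1..k. X i x)))"
  define m where "m = real_cond_exp M F (X t)"
  define c where "c = (exp (l*b) - 1) / b"
  define K where "K = 1 + p*(exp (l*b) - 1)"
  have t: "t \<in> {1..n}" using Suc.prems t_def by auto
  have sub: "subalgebra M F" unfolding F_def
    by (rule past_subalg) (use meas t in auto)
  interpret S: finite_measure_subalgebra M F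
    unfolding finite_measure_subalgebra_def finite_measure_subalgebra_axioms_def
    using sub finite_measure_axioms by auto
  interpret S2: sigma_finite_subalgebra M F
    by (rule finite_measure_subalgebra_is_sigma_finite) (rule S.finite_measure_subalgebra_axioms)
  have Xm: "\<And>i. i \<in> {1..k} \<Longrightarrow> X i \<in> borel_measurable M" using meas Suc.prems by auto
  have "(\<lambda>x. \<Sum>i=1..k. X i x) \<in> borel_measurable F"
    unfolding F_def by (intro borel_measurable_sum past_meas) (auto simp: t_def)
  hence fF[measurable]: "f \<in> borel_measurable F" unfolding f_def by measurable
  have "(\<lambda>x. \<Sum>i=1..k. X i x) \<in> borel_measurable M"
    by (intro borel_measurable_sum Xm)
  hence fM[measurable]: "f \<in> borel_measurable M" unfolding f_def by measurable
  have Xt[measurable]: "X t \<in> borel_measurable M" using meas t by auto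
  have fpos: "\<And>x. f x > 0" unfolding f_def by simp
  define B where "B = exp (\<bar>l\<bar> * (k*b))"
  have Bpos: "B > 0" unfolding B_def by simp
  have Sb: "0 \<le> (\<Sum>i=1..k. X i x) \<and> (\<Sum>i=1..k. X i x) \<le> k*b" if "x \<in> space M" for x
  proof
    show "0 \<le> (\<Sum>i=1..k. X i x)" using range[of _ x] that Suc.prems
      by (intro sum_nonneg) auto
    have "(\<Sum>i=1..k. X i x) \<le> (\<Sum>i=1..k. b)" using range[of _ x] that Suc.prems
      by (intro sum_mono) auto
    thus "(\<Sum>i=1..k. X i x) \<le> k*b" by simp
  qed
  have fB: "f x \<le> B" if "x \<in> space M" for x
  proof -
    have "l * (\<Sum>i=1..k. X i x) \<le> \<bar>l\<bar> * (k*b)"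
    proof -
      have "l * (\<Sum>i=1..k. X i x) \<le> \<bar>l * (\<Sum>i=1..k. X i x)\<bar>" by simp
      also have "\<dots> = \<bar>l\<bar> * (\<Sum>i=1..k. X i x)" using Sb[OF that] by (simp add: abs_mult)
      also have "\<dots> \<le> \<bar>l\<bar> * (k*b)" using Sb[OF that] by (intro mult_left_mono) auto
      finally show ?thesis .
    qed
    thus ?thesis unfolding f_def B_def by simp
  qed
  have Xr: "0 \<le> X t x" "X t x \<le> b" if "x \<in> space M" for x using range[OF t that] by auto
  have int_f: "integrable M f"
    by (rule integrable_const_bound[where B=B]) (use fB fpos in \<open>auto intro!: AE_I2 simp: less_imp_le\<close>)
  have int_fX: "integrable M (\<lambda>x. f x * X t x)"
  proof (rule integrable_const_bound[where B="B*b"])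
    show "AE x in M. norm (f x * X t x) \<le> B * b"
    proof (rule AE_I2)
      fix x assume x: "x \<in> space M"
      have "norm (f x * X t x) = f x * X t x" using fpos[of x] Xr[OF x] by (simp add: abs_mult less_imp_le)
      also have "\<dots> \<le> B * b" using fB[OF x] Xr[OF x] fpos[of x] by (intro mult_mono) auto
      finally show "norm (f x * X t x) \<le> B * b" .
    qed
  qed measurable
  have int_fm: "integrable M (\<lambda>x. f x * m x)" and eq_fm: "(\<integral>x. f x * m x \<partial>M) = (\<integral>x. f x * X t x \<partial>M)"
    unfolding m_def using S.real_cond_exp_intg[OF int_fX fF Xt] by auto
  have int_fe: "integrable M (\<lambda>x. f x * exp (l * X t x))"
  proof (rule integrable_const_bound[where B="B*exp (\<bar>l\<bar>*b)"])
    show "AE x in M. norm (f x * exp (l * X t x)) \<le> B * exp (\<bar>l\<bar>*b)"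
    proof (rule AE_I2)
      fix x assume x: "x \<in> space M"
      have "l * X t x \<le> \<bar>l\<bar> * b"
      proof -
        have "l * X t x \<le> \<bar>l\<bar> * X t x" using Xr[OF x] by (intro mult_right_mono) auto
        also have "\<dots> \<le> \<bar>l\<bar> * b" using Xr[OF x] by (intro mult_left_mono) auto
        finally show ?thesis .
      qed
      hence "exp (l * X t x) \<le> exp (\<bar>l\<bar>*b)" by simp
      moreover have "norm (f x * exp (l * X t x)) = f x * exp (l * X t x)" using fpos[of x] by (simp add: abs_mult less_imp_le)
      moreover have "f x * exp (l * X t x) \<le> B * exp (\<bar>l\<bar>*b)"
        by (rule mult_mono) (use fB[OF x] fpos[of x] \<open>exp (l * X t x) \<le> exp (\<bar>l\<bar>*b)\<close> Bpos in auto)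
      ultimately show "norm (f x * exp (l * X t x)) \<le> B * exp (\<bar>l\<bar>*b)"
        by simp
    qed
  qed measurable
  have Kpos: "K \<ge> 0"
  proof -
    have "K = (1 - p) + p * exp (l*b)" unfolding K_def by (simp add: algebra_simps)
    thus ?thesis using p by simp
  qed
  have AEm: "AE x in M. f x * (c * m x) \<le> f x * (c * (p*b))"
    using cb[OF t]
  proof (rule AE_mp, intro AE_I2 impI)
    fix x assume "(exp (l*b) - 1) * real_cond_exp M (past_algebra M X t) (X t) x \<le> (exp (l*b) - 1) * (p*b)"
    hence "(exp (l*b) - 1) * m x / b \<le> (exp (l*b) - 1) * (p*b) / b"
      unfolding m_def F_def using b by (intro divide_right_mono) auto
    hence "c * m x \<le> c * (p*b)" unfolding c_def by (simp add: field_simps)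
    thus "f x * (c * m x) \<le> f x * (c * (p*b))" by (rule mult_left_mono) (use fpos[of x] in auto)
  qed
  have "(\<integral>x. exp (l * (\<Sum>i=1..Suc k. X i x)) \<partial>M) = (\<integral>x. f x * exp (l * X t x) \<partial>M)"
    unfolding f_def t_def by (simp add: atLeastAtMostSuc_conv distrib_left exp_add mult.commute)
  also have "\<dots> \<le> (\<integral>x. f x * (1 + X t x * c) \<partial>M)"
  proof (rule integral_mono)
    have "(\<lambda>x. f x * (1 + X t x * c)) = (\<lambda>x. f x + c * (f x * X t x))"
      by (simp add: fun_eq_iff algebra_simps)
    thus "integrable M (\<lambda>x. f x * (1 + X t x * c))"
      using int_f int_fX by simp
    fix x assume x: "x \<in> space M"
    show "f x * exp (l * X t x) \<le> f x * (1 + X t x * c)"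
      by (rule mult_left_mono) (use exp_convex_bound[OF b Xr[OF x], of l] fpos[of x] in \<open>auto simp: c_def\<close>)
  qed (rule int_fe)
  also have "\<dots> = (\<integral>x. f x \<partial>M) + c * (\<integral>x. f x * X t x \<partial>M)"
  proof -
    have "(\<lambda>x. f x * (1 + X t x * c)) = (\<lambda>x. f x + c * (f x * X t x))"
      by (simp add: fun_eq_iff algebra_simps)
    thus ?thesis using int_f int_fX by simp
  qed
  also have "\<dots> = (\<integral>x. f x \<partial>M) + (\<integral>x. f x * (c * m x) \<partial>M)"
  proof -
    have "(\<lambda>x. f x * (c * m x)) = (\<lambda>x. c * (f x * m x))"
      by (simp add: fun_eq_iff algebra_simps)
    thus ?thesis using int_fm eq_fm by simp
  qed
  also have "\<dots> \<le> (\<integral>x. f x \<partial>M) + (\<integral>x. f x * (c * (p*b)) \<partial>M)"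
  proof (intro add_left_mono integral_mono_AE AEm)
    have "(\<lambda>x. f x * (c * m x)) = (\<lambda>x. c * (f x * m x))"
      by (simp add: fun_eq_iff algebra_simps)
    thus "integrable M (\<lambda>x. f x * (c * m x))" using int_fm by simp
    show "integrable M (\<lambda>x. f x * (c * (p*b)))" using int_f by simp
  qed
  also have "\<dots> = (\<integral>x. f x \<partial>M) * (1 + c * (p*b))"
    by (simp add: algebra_simps)
  also have "\<dots> = (\<integral>x. f x \<partial>M) * K"
  proof -
    have "1 + c * (p*b) = K"
      using b unfolding K_def c_def by simp
    thus ?thesis by simp
  qed
  also have "\<dots> \<le> (1 + p*(exp (l*b) - 1))^k * K"
    using Suc.IH Suc.prems Kpos unfolding f_def by (intro mult_right_mono) auto
  finally show ?case unfolding K_def by (simp add: mult.commute)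
qed

lemma bounded_exp_integrable:
  fixes X :: "nat \<Rightarrow> 'a \<Rightarrow> real" and l b :: real
  assumes P: "prob_space M"
    and meas: "\<And>t. t \<in> {1..n} \<Longrightarrow> X t \<in> borel_measurable M"
    and range: "\<And>t x. t \<in> {1..n} \<Longrightarrow> x \<in> space M \<Longrightarrow> X t x \<in> {0..b}"
  shows "integrable M (\<lambda>x. exp (l * (\<Sum>t=1..n. X t x)))"
proof -
  interpret prob_space M by fact
  have Sm: "(\<lambda>x. \<Sum>t=1..n. X t x) \<in> borel_measurable M"
    by (intro borel_measurable_sum meas)
  show ?thesis
  proof (rule integrable_const_bound[where B="exp (\<bar>l\<bar> * (n*b))"])
    show "(\<lambda>x. exp (l * (\<Sum>t=1..n. X t x))) \<in> borel_measurable M" using Sm by measurable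
    show "AE x in M. norm (exp (l * (\<Sum>t=1..n. X t x))) \<le> exp (\<bar>l\<bar> * (n*b))"
    proof (rule AE_I2)
      fix x assume x: "x \<in> space M"
      have S0: "0 \<le> (\<Sum>t=1..n. X t x)" using range[of _ x] x by (intro sum_nonneg) auto
      have "(\<Sum>t=1..n. X t x) \<le> (\<Sum>t=1..n. b)" using range[of _ x] x by (intro sum_mono) auto
      hence S1: "(\<Sum>t=1..n. X t x) \<le> n*b" by simp
      have "l * (\<Sum>t=1..n. X t x) \<le> \<bar>l\<bar> * (\<Sum>t=1..n. X t x)" using S0 by (intro mult_right_mono) auto
      also have "\<dots> \<le> \<bar>l\<bar> * (n*b)" using S1 by (intro mult_left_mono) auto
      finally show "norm (exp (l * (\<Sum>t=1..n. X t x))) \<le> exp (\<bar>l\<bar> * (n*b))" by simp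
    qed
  qed
qed

lemma tail_bound:
  fixes X :: "nat \<Rightarrow> 'a \<Rightarrow> real" and l b p s :: real
  assumes P: "prob_space M"
    and meas: "\<And>t. t \<in> {1..n} \<Longrightarrow> X t \<in> borel_measurable M"
    and range: "\<And>t x. t \<in> {1..n} \<Longrightarrow> x \<in> space M \<Longrightarrow> X t x \<in> {0..b}"
    and b: "b > 0"
    and cb: "\<And>t. t \<in> {1..n} \<Longrightarrow> AE x in M. (exp (l*b) - 1) * real_cond_exp M (past_algebra M X t) (X t) x \<le> (exp (l*b) - 1) * (p*b)"
    and p: "0 \<le> p" "p \<le> 1"
  shows "measure M {x \<in> space M. 0 \<le> l * ((\<Sum>t=1..n. X t x) - s)}
           \<le> exp (- l * s + n * (l * b * p + (l*b)\<^sup>2 / 8))"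
proof -
  interpret prob_space M by fact
  define A where "A = {x \<in> space M. 0 \<le> l * ((\<Sum>t=1..n. X t x) - s)}"
  define K where "K = 1 + p*(exp (l*b) - 1)"
  have Sm: "(\<lambda>x. \<Sum>t=1..n. X t x) \<in> borel_measurable M"
    by (intro borel_measurable_sum meas)
  have Am: "A \<in> sets M" unfolding A_def using Sm by measurable
  have int: "integrable M (\<lambda>x. exp (l * (\<Sum>t=1..n. X t x)))"
    by (rule bounded_exp_integrable[OF P meas range])
  have Kpos: "K \<ge> 0"
  proof -
    have "K = (1 - p) + p * exp (l*b)" unfolding K_def by (simp add: algebra_simps)
    thus ?thesis using p by simp
  qed
  have "measure M A = (\<integral>x. indicator A x \<partial>M)" using Am by simp
  also have "\<dots> \<le> (\<integral>x. exp (- l * s) * exp (l * (\<Sum>t=1..n. X t x)) \<partial>M)"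
  proof (rule integral_mono)
    show "integrable M (indicator A :: 'a \<Rightarrow> real)" using Am by (intro integrable_real_indicator) (auto simp: less_top[symmetric])
    show "integrable M (\<lambda>x. exp (- l * s) * exp (l * (\<Sum>t=1..n. X t x)))" using int by simp
    fix x assume x: "x \<in> space M"
    have e: "exp (- l * s) * exp (l * (\<Sum>t=1..n. X t x)) = exp (l * ((\<Sum>t=1..n. X t x) - s))"
      by (simp add: exp_add[symmetric] algebra_simps)
    show "indicator A x \<le> exp (- l * s) * exp (l * (\<Sum>t=1..n. X t x))"
      unfolding e by (cases "x \<in> A") (auto simp: A_def x)
  qed
  also have "\<dots> = exp (- l * s) * (\<integral>x. exp (l * (\<Sum>t=1..n. X t x)) \<partial>M)" by simp
  also have "\<dots> \<le> exp (- l * s) * K ^ n"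
    using mgf_bound[OF P meas range b cb p, of n] unfolding K_def by simp
  also have "\<dots> \<le> exp (- l * s) * exp (l * b * p + (l*b)\<^sup>2 / 8) ^ n"
    using hoeff_aux[OF p, of "l*b"] Kpos unfolding K_def by (intro mult_left_mono power_mono) auto
  also have "\<dots> = exp (- l * s + n * (l * b * p + (l*b)\<^sup>2 / 8))"
    by (subst exp_add, subst exp_of_nat_mult, rule refl)
  finally show ?thesis unfolding A_def .
qed

lemma cond_range:
  fixes X :: "nat \<Rightarrow> 'a \<Rightarrow> real" and b :: real
  assumes P: "prob_space M"
    and meas: "\<And>t. t \<in> {1..n} \<Longrightarrow> X t \<in> borel_measurable M"
    and range: "\<And>t x. t \<in> {1..n} \<Longrightarrow> x \<in> space M \<Longrightarrow> X t x \<in> {0..b}"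
    and t: "t \<in> {1..n}"
  shows "AE x in M. 0 \<le> real_cond_exp M (past_algebra M X t) (X t) x \<and> real_cond_exp M (past_algebra M X t) (X t) x \<le> b"
proof -
  interpret prob_space M by fact
  define F where "F = past_algebra M X t"
  have sub: "subalgebra M F" unfolding F_def
    by (rule past_subalg) (use meas t in auto)
  interpret S: finite_measure_subalgebra M F
    unfolding finite_measure_subalgebra_def finite_measure_subalgebra_axioms_def
    using sub finite_measure_axioms by auto
  have Xt[measurable]: "X t \<in> borel_measurable M" using meas t by auto
  have int: "integrable M (X t)"
    by (rule integrable_const_bound[where B=b]) (use range[OF t] in \<open>auto intro!: AE_I2\<close>)
  have "AE x in M. real_cond_exp M F (X t) x \<ge> 0"
    by (rule S.real_cond_exp_ge_c[OF int]) (use range[OF t] in \<open>auto intro!: AE_I2\<close>)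
  moreover have "AE x in M. real_cond_exp M F (X t) x \<le> b"
    by (rule S.real_cond_exp_le_c[OF int]) (use range[OF t] in \<open>auto intro!: AE_I2\<close>)
  ultimately show ?thesis unfolding F_def by eventually_elim auto
qed

lemma upper_tail:
  fixes X :: "nat \<Rightarrow> 'a \<Rightarrow> real" and b \<mu> C a :: real
  assumes P: "prob_space M"
    and meas: "\<And>t. t \<in> {1..n} \<Longrightarrow> X t \<in> borel_measurable M"
    and range: "\<And>t x. t \<in> {1..n} \<Longrightarrow> x \<in> space M \<Longrightarrow> X t x \<in> {0..b}"
    and AEm: "\<And>t. t \<in> {1..n} \<Longrightarrow> AE x in M. real_cond_exp M (past_algebra M X t) (X t) x \<le> b \<and>
                 real_cond_exp M (past_algebra M X t) (X t) x \<le> \<mu> + C"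
    and C: "0 < C" "C < \<mu>" and n: "n \<ge> 1" and a: "a > 0" and b: "b > 0"
  shows "measure M {x \<in> space M. (\<Sum>t=1..n. X t x) \<ge> n * (\<mu> + C) + a}
           \<le> exp (- 2 * (a * (\<mu> - C) / (b * (\<mu> + C)))^2 / n)"
proof -
  define D where "D = n * b\<^sup>2"
  have D: "D > 0" unfolding D_def using n b by simp
  define l1 where "l1 = 4 * a / D"
  define p1 where "p1 = min ((\<mu> + C) / b) 1"
  have l1: "l1 > 0" unfolding l1_def using a D by simp
  have p1: "0 \<le> p1" "p1 \<le> 1" unfolding p1_def using b C by auto
  have p1b: "p1 * b = min (\<mu> + C) b" unfolding p1_def using b by (simp add: min_def field_simps)
  have e0: "exp (l1*b) - 1 \<ge> 0" using l1 b by simp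
  have cb1: "AE x in M. (exp (l1*b) - 1) * real_cond_exp M (past_algebra M X t) (X t) x \<le> (exp (l1*b) - 1) * (p1*b)"
    if t: "t \<in> {1..n}" for t
    using AEm[OF t]
  proof (rule AE_mp, intro AE_I2 impI)
    fix x assume h: "real_cond_exp M (past_algebra M X t) (X t) x \<le> b \<and>
                 real_cond_exp M (past_algebra M X t) (X t) x \<le> \<mu> + C"
    have "real_cond_exp M (past_algebra M X t) (X t) x \<le> p1 * b" unfolding p1b using h by simp
    thus "(exp (l1*b) - 1) * real_cond_exp M (past_algebra M X t) (X t) x \<le> (exp (l1*b) - 1) * (p1*b)"
      using e0 by (rule mult_left_mono)
  qed
  define s1 where "s1 = n * (\<mu> + C) + a"
  have T1: "measure M {x \<in> space M. 0 \<le> l1 * ((\<Sum>t=1..n. X t x) - s1)}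
         \<le> exp (- l1 * s1 + n * (l1 * b * p1 + (l1*b)\<^sup>2 / 8))"
    by (rule tail_bound[OF P meas range b cb1 p1])
  have set1: "{x \<in> space M. 0 \<le> l1 * ((\<Sum>t=1..n. X t x) - s1)} =
              {x \<in> space M. (\<Sum>t=1..n. X t x) \<ge> n * (\<mu> + C) + a}"
    using l1 unfolding s1_def by (auto simp: zero_le_mult_iff)
  have ex1: "- l1 * s1 + n * (l1 * b * p1 + (l1*b)\<^sup>2 / 8) \<le> - 2 * a\<^sup>2 / D"
  proof -
    have "n * (p1 * b) \<le> n * (\<mu> + C)" unfolding p1b by (intro mult_left_mono) auto
    hence "s1 - n * (p1 * b) \<ge> a" unfolding s1_def by simp
    hence "l1 * (s1 - n * (p1 * b)) \<ge> l1 * a" using l1 by (intro mult_left_mono) auto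
    moreover have "- l1 * a + n * (l1*b)\<^sup>2 / 8 = - 2 * a\<^sup>2 / D"
      unfolding l1_def using D by (simp add: D_def field_simps power2_eq_square)
    ultimately show ?thesis by (simp add: algebra_simps)
  qed
  have tg1: "- 2 * a\<^sup>2 / D \<le> - 2 * (a * (\<mu> - C) / (b * (\<mu> + C)))^2 / n"
  proof -
    have r: "0 \<le> (\<mu> - C) / (\<mu> + C)" "(\<mu> - C) / (\<mu> + C) \<le> 1"
      using C by auto
    have e: "a * (\<mu> - C) / (b * (\<mu> + C)) = (a / b) * ((\<mu> - C) / (\<mu> + C))" by simp
    have "(a * (\<mu> - C) / (b * (\<mu> + C)))^2 \<le> (a / b)^2"
      unfolding e power_mult_distrib using r a b
      by (intro mult_left_le) (auto intro!: power_le_one)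
    hence "2 * (a * (\<mu> - C) / (b * (\<mu> + C)))^2 / n \<le> 2 * (a / b)^2 / n"
      using n by (intro divide_right_mono) auto
    moreover have "2 * (a / b)^2 / n = 2 * a\<^sup>2 / D" unfolding D_def using b
      by (simp add: power_divide field_simps)
    ultimately show ?thesis by simp
  qed
  have "exp (- l1 * s1 + n * (l1 * b * p1 + (l1*b)\<^sup>2 / 8))
        \<le> exp (- 2 * (a * (\<mu> - C) / (b * (\<mu> + C)))^2 / n)"
    using ex1 tg1 by simp
  with T1 show ?thesis unfolding set1 by linarith
qed

lemma lower_tail:
  fixes X :: "nat \<Rightarrow> 'a \<Rightarrow> real" and b \<mu> C a :: real
  assumes P: "prob_space M"
    and meas: "\<And>t. t \<in> {1..n} \<Longrightarrow> X t \<in> borel_measurable M"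
    and range: "\<And>t x. t \<in> {1..n} \<Longrightarrow> x \<in> space M \<Longrightarrow> X t x \<in> {0..b}"
    and AEm: "\<And>t. t \<in> {1..n} \<Longrightarrow> AE x in M. \<mu> - C \<le> real_cond_exp M (past_algebra M X t) (X t) x"
    and C: "C < \<mu>" "\<mu> - C \<le> b" and n: "n \<ge> 1" and a: "a > 0" and b: "b > 0"
  shows "measure M {x \<in> space M. (\<Sum>t=1..n. X t x) \<le> n * (\<mu> - C) - a}
           \<le> exp (- 2 * (a / b)^2 / n)"
proof -
  define D where "D = n * b\<^sup>2"
  have D: "D > 0" unfolding D_def using n b by simp
  define l2 where "l2 = - 4 * a / D"
  define p2 where "p2 = (\<mu> - C) / b"
  have l2: "l2 < 0" unfolding l2_def using a D by (simp add: divide_neg_pos)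
  have p2: "0 \<le> p2" "p2 \<le> 1" unfolding p2_def using b C by auto
  have p2b: "p2 * b = \<mu> - C" unfolding p2_def using b by simp
  have e0: "exp (l2*b) - 1 \<le> 0" using l2 b by (simp add: mult_neg_pos less_imp_le)
  have cb2: "AE x in M. (exp (l2*b) - 1) * real_cond_exp M (past_algebra M X t) (X t) x \<le> (exp (l2*b) - 1) * (p2*b)"
    if t: "t \<in> {1..n}" for t
    using AEm[OF t]
  proof (rule AE_mp, intro AE_I2 impI)
    fix x assume h: "\<mu> - C \<le> real_cond_exp M (past_algebra M X t) (X t) x"
    have "p2 * b \<le> real_cond_exp M (past_algebra M X t) (X t) x" unfolding p2b using h by simp
    thus "(exp (l2*b) - 1) * real_cond_exp M (past_algebra M X t) (X t) x \<le> (exp (l2*b) - 1) * (p2*b)"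
      using e0 by (rule mult_left_mono_neg)
  qed
  define s2 where "s2 = n * (\<mu> - C) - a"
  have T2: "measure M {x \<in> space M. 0 \<le> l2 * ((\<Sum>t=1..n. X t x) - s2)}
         \<le> exp (- l2 * s2 + n * (l2 * b * p2 + (l2*b)\<^sup>2 / 8))"
    by (rule tail_bound[OF P meas range b cb2 p2])
  have set2: "{x \<in> space M. 0 \<le> l2 * ((\<Sum>t=1..n. X t x) - s2)} =
              {x \<in> space M. (\<Sum>t=1..n. X t x) \<le> n * (\<mu> - C) - a}"
    using l2 unfolding s2_def by (auto simp: zero_le_mult_iff)
  have e: "s2 = n * (p2 * b) - a" unfolding s2_def p2b by simp
  have ex2a: "- l2 * s2 + n * (l2 * b * p2 + (l2*b)\<^sup>2 / 8) = l2 * a + n * (l2*b)\<^sup>2 / 8"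
    unfolding e by (simp add: algebra_simps)
  have ex2b: "l2 * a + n * (l2*b)\<^sup>2 / 8 = - 2 * (a / b)^2 / n"
    unfolding l2_def D_def using n b by (simp add: field_simps power2_eq_square)
  show ?thesis using T2 unfolding set2 ex2a ex2b .
qed

theorem lemma1:
  fixes M :: "'a measure" and X :: "nat \<Rightarrow> 'a \<Rightarrow> real"
    and n :: nat and b \<mu> C a :: real
  assumes "prob_space M"
    and meas: "\<And>t. t \<in> {1..n} \<Longrightarrow> X t \<in> borel_measurable M"
    and range: "\<And>t x. t \<in> {1..n} \<Longrightarrow> x \<in> space M \<Longrightarrow> X t x \<in> {0..b}"
    and cond: "\<And>t. t \<in> {1..n} \<Longrightarrow>
                 AE x in M. \<bar>real_cond_exp M (past_algebra M X t) (X t) x - \<mu>\<bar> \<le> C"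
    and "0 < C" and "C < \<mu>"
    and "a \<ge> 0"
  shows "measure M {x \<in> space M. (\<Sum>t=1..n. X t x) \<ge> n * (\<mu> + C) + a}
           \<le> exp (- 2 * (a * (\<mu> - C) / (b * (\<mu> + C)))^2 / n) \<and>
         measure M {x \<in> space M. (\<Sum>t=1..n. X t x) \<le> n * (\<mu> - C) - a}
           \<le> exp (- 2 * (a / b)^2 / n)"
proof (cases "n = 0 \<or> a = 0")
  case True
  note P = \<open>prob_space M\<close>
  from True show ?thesis by (auto intro!: prob_space.prob_le_1[OF P])
next
  case False
  note P = \<open>prob_space M\<close>
  have n: "n \<ge> 1" and a: "a > 0" using False \<open>a \<ge> 0\<close> by auto
  have AEm: "AE x in M. real_cond_exp M (past_algebra M X t) (X t) x \<le> b \<and>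
               \<mu> - C \<le> real_cond_exp M (past_algebra M X t) (X t) x \<and>
               real_cond_exp M (past_algebra M X t) (X t) x \<le> \<mu> + C"
    if t: "t \<in> {1..n}" for t
  proof -
    have h1: "AE x in M. 0 \<le> real_cond_exp M (past_algebra M X t) (X t) x \<and>
                real_cond_exp M (past_algebra M X t) (X t) x \<le> b"
      by (rule cond_range[OF P meas range t])
    have "AE x in M. (0 \<le> real_cond_exp M (past_algebra M X t) (X t) x \<and>
                real_cond_exp M (past_algebra M X t) (X t) x \<le> b) \<and>
                \<bar>real_cond_exp M (past_algebra M X t) (X t) x - \<mu>\<bar> \<le> C"
      using h1 cond[OF t] by (rule AE_conjI)
    thus ?thesis by (rule AE_mp) (auto intro!: AE_I2 simp: abs_le_iff)
  qed
  have t1: "1 \<in> {1..n}" using n by simp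
  have "AE x in M. \<mu> - C \<le> b" using AEm[OF t1] by (rule AE_mp) (auto intro!: AE_I2)
  hence muCb: "\<mu> - C \<le> b" using prob_space.AE_const[OF P] by simp
  hence b: "b > 0" using \<open>C < \<mu>\<close> by simp
  have U: "measure M {x \<in> space M. (\<Sum>t=1..n. X t x) \<ge> n * (\<mu> + C) + a}
           \<le> exp (- 2 * (a * (\<mu> - C) / (b * (\<mu> + C)))^2 / n)"
  proof (rule upper_tail[OF P meas range _ \<open>0 < C\<close> \<open>C < \<mu>\<close> n a b])
    fix t assume t: "t \<in> {1..n}"
    show "AE x in M. real_cond_exp M (past_algebra M X t) (X t) x \<le> b \<and>
                 real_cond_exp M (past_algebra M X t) (X t) x \<le> \<mu> + C"
      using AEm[OF t] by (rule AE_mp) (auto intro!: AE_I2)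
  qed
  have L: "measure M {x \<in> space M. (\<Sum>t=1..n. X t x) \<le> n * (\<mu> - C) - a}
           \<le> exp (- 2 * (a / b)^2 / n)"
  proof (rule lower_tail[OF P meas range _ \<open>C < \<mu>\<close> muCb n a b])
    fix t assume t: "t \<in> {1..n}"
    show "AE x in M. \<mu> - C \<le> real_cond_exp M (past_algebra M X t) (X t) x"
      using AEm[OF t] by (rule AE_mp) (auto intro!: AE_I2)
  qed
  from U L show ?thesis ..
qed

end
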